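(* Let $X$ be an infinite-dimensional Polish topological vector space, $\mathcal F\subset2^{\mathbb N}$ a Furstenberg family, and $T\in\mathfrak L(X)$ hereditarily $\mathcal F$-hypercyclic. Then for every countable family $(A_i)_{i\in I}\subset\mathcal F$ and every family $(V_i)_{i\in I}$ of non-empty open subsets of $X$, the set of $x\in X$ such that $\mathcal N_T(x,V_i)\cap A_i\in\mathcal F$ for all $i\in I$ is dense in $X$.
   Context: A Furstenberg family is a family of non-empty subsets of $\mathbb N$ hereditary upwards. $\mathcal N_T(x,V):=\{n\in\mathbb N:T^nx\in V\}$. $T$ is hereditarily $\mathcal F$-hypercyclic if for every countable family $(V_i)_{i\in I}$ of non-empty open sets and every family $(A_i)_{i\in I}\subset\mathcal F$, there exists $x$ with $\mathcal N_T(x,V_i)\cap A_i\in\mathcal F$ for all $i\in I$. *)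

theory Defs
  imports "HOL-Analysis.Analysis"
begin

definition furstenberg_family :: "nat set set \<Rightarrow> bool" where
  "furstenberg_family \<F> \<longleftrightarrow>
     (\<forall>A\<in>\<F>. A \<noteq> {}) \<and> (\<forall>A B. A \<in> \<F> \<longrightarrow> A \<subseteq> B \<longrightarrow> B \<in> \<F>)"

definition return_set :: "('a \<Rightarrow> 'a) \<Rightarrow> 'a \<Rightarrow> 'a set \<Rightarrow> nat set" where
  "return_set T x V = {n. (T ^^ n) x \<in> V}"

text \<open>Countable families are indexed by subsets I of the naturals.\<close>
definition hered_F_hypercyclic ::
    "nat set set \<Rightarrow> ('a::topological_space \<Rightarrow> 'a) \<Rightarrow> bool" where
  "hered_F_hypercyclic \<F> T \<longleftrightarrow>
     (\<forall>(I::nat set) (V::nat \<Rightarrow> 'a set) (A::nat \<Rightarrow> nat set).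
        (\<forall>i\<in>I. open (V i) \<and> V i \<noteq> {} \<and> A i \<in> \<F>) \<longrightarrow>
        (\<exists>x. \<forall>i\<in>I. return_set T x (V i) \<inter> A i \<in> \<F>))"

definition tvs_ops_continuous :: "'a::{real_vector, topological_space} itself \<Rightarrow> bool" where
  "tvs_ops_continuous _ \<longleftrightarrow>
     continuous_on UNIV (\<lambda>p::'a \<times> 'a. fst p + snd p) \<and>
     continuous_on UNIV (\<lambda>p::real \<times> 'a. fst p *\<^sub>R snd p)"

definition infinite_dimensional :: "'a::real_vector itself \<Rightarrow> bool" where
  "infinite_dimensional _ \<longleftrightarrow> \<not> (\<exists>B::'a set. finite B \<and> span B = UNIV)"

end

theory Submission
  imports Defs
begin

lemma hered_countable:
  fixes J :: "'j set" and V :: "'j \<Rightarrow> 'a::topological_space set"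
  assumes h: "hered_F_hypercyclic \<F> T" and c: "countable J"
    and cond: "\<forall>j\<in>J. open (V j) \<and> V j \<noteq> {} \<and> A j \<in> \<F>"
  shows "\<exists>x. \<forall>j\<in>J. return_set T x (V j) \<inter> A j \<in> \<F>"
proof (cases "J = {}")
  case True then show ?thesis by simp
next
  case False
  define f where "f = from_nat_into J"
  have fJ: "f n \<in> J" for n unfolding f_def by (rule from_nat_into[OF False])
  have "\<forall>i\<in>(UNIV::nat set). open (V (f i)) \<and> V (f i) \<noteq> {} \<and> A (f i) \<in> \<F>"
    using cond fJ by blast
  then obtain x where x: "\<forall>i\<in>(UNIV::nat set). return_set T x (V (f i)) \<inter> A (f i) \<in> \<F>"
    using h[unfolded hered_F_hypercyclic_def, rule_format, of UNIV "\<lambda>i. V (f i)" "\<lambda>i. A (f i)"] by blast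
  show ?thesis
  proof (intro exI ballI)
    fix j assume "j \<in> J"
    then have "f (to_nat_on J j) = j" unfolding f_def by (rule from_nat_into_to_nat_on[OF c])
    then show "return_set T x (V j) \<inter> A j \<in> \<F>" using x[rule_format, of "to_nat_on J j"] by simp
  qed
qed

lemma perfect_aux:
  fixes U :: "'a::{real_vector, topological_space} set"
  assumes tvs: "tvs_ops_continuous TYPE('a)" and inf: "infinite_dimensional TYPE('a)"
    and U: "open U" "U \<noteq> {}"
  shows "infinite U"
proof -
  obtain x where x: "x \<in> U" using U by blast
  have "span {} \<noteq> (UNIV::'a set)" using inf unfolding infinite_dimensional_def by blast
  then obtain e :: 'a where e: "e \<noteq> 0" by auto
  define g where "g = (\<lambda>t::real. x + t *\<^sub>R e)"
  have c1: "continuous_on UNIV (\<lambda>p::'a \<times> 'a. fst p + snd p)"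
    and c2: "continuous_on UNIV (\<lambda>p::real \<times> 'a. fst p *\<^sub>R snd p)"
    using tvs unfolding tvs_ops_continuous_def by auto
  have "continuous_on UNIV (\<lambda>t::real. (t, e))" by (intro continuous_intros)
  then have "continuous_on UNIV ((\<lambda>p::real \<times> 'a. fst p *\<^sub>R snd p) \<circ> (\<lambda>t::real. (t, e)))"
    by (rule continuous_on_compose) (rule continuous_on_subset[OF c2], simp)
  then have cs: "continuous_on UNIV (\<lambda>t::real. t *\<^sub>R e)" by (simp add: o_def)
  have "continuous_on UNIV (\<lambda>t::real. (x, t *\<^sub>R e))" by (intro continuous_intros cs)
  then have "continuous_on UNIV ((\<lambda>p::'a \<times> 'a. fst p + snd p) \<circ> (\<lambda>t::real. (x, t *\<^sub>R e)))"
    by (rule continuous_on_compose) (rule continuous_on_subset[OF c1], simp)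
  then have cg: "continuous_on UNIV g" by (simp add: o_def g_def)
  have op: "open (g -` U)" using open_vimage[OF U(1) cg] .
  have "0 \<in> g -` U" using x by (simp add: g_def)
  then obtain d where d: "d > 0" "ball 0 d \<subseteq> g -` U" using op open_contains_ball by blast
  have "{-d<..<d} \<subseteq> ball (0::real) d" by (auto simp: dist_real_def)
  moreover have "infinite {-d<..<d}" using d(1) by simp
  ultimately have "infinite (ball (0::real) d)" using finite_subset by blast
  moreover have "inj g" unfolding g_def inj_def using e by auto
  ultimately have "infinite (g ` ball 0 d)" using finite_imageD inj_on_subset by blast
  moreover have "g ` ball 0 d \<subseteq> U" using d(2) by blast
  ultimately show ?thesis using finite_subset by blast
qed

lemma funpow_comm: "(f ^^ m) ((f ^^ k) y) = (f ^^ k) ((f ^^ m) y)"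
  by (metis funpow_add add.commute o_apply)

lemma cont_funpow:
  fixes T :: "'a::topological_space \<Rightarrow> 'a"
  assumes "continuous_on UNIV T"
  shows "continuous_on UNIV (T ^^ n)"
proof (induction n)
  case 0
  have "T ^^ 0 = id" by simp
  then show ?case using continuous_on_id' by metis
next
  case (Suc n)
  have "continuous_on UNIV (T \<circ> (T ^^ n))"
    by (rule continuous_on_compose[OF Suc]) (rule continuous_on_subset[OF assms], simp)
  then show ?case by simp
qed

theorem proposition6p4:
  fixes T :: "'a::{real_vector, polish_space} \<Rightarrow> 'a"
    and \<F> :: "nat set set"
    and I :: "'i set"
    and A :: "'i \<Rightarrow> nat set"
    and V :: "'i \<Rightarrow> 'a set"
  assumes "tvs_ops_continuous TYPE('a)"
    and "infinite_dimensional TYPE('a)"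
    and "furstenberg_family \<F>"
    and "linear T" and "continuous_on UNIV T"
    and "hered_F_hypercyclic \<F> T"
    and "countable I"
    and "\<forall>i\<in>I. A i \<in> \<F>"
    and "\<forall>i\<in>I. open (V i) \<and> V i \<noteq> {}"
  shows "closure {x. \<forall>i\<in>I. return_set T x (V i) \<inter> A i \<in> \<F>} = UNIV"
proof (cases "I = {}")
  case True then show ?thesis by simp
next
  case False
  note tvs = assms(1) and inf = assms(2) and ff = assms(3) and cT = assms(5) and h = assms(6)
  obtain i0 where "i0 \<in> I" using False by blast
  then have "A i0 \<in> \<F>" using assms(8) by blast
  then have UF: "UNIV \<in> \<F>" using ff unfolding furstenberg_family_def by blast
  have Fne: "B \<noteq> {}" if "B \<in> \<F>" for B using ff that unfolding furstenberg_family_def by blast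
  obtain B :: "'a set set" where B: "countable B" "topological_basis B"
    using ex_countable_basis by blast
  define B' where "B' = B - {{}}"
  have "\<forall>b\<in>B'. open (id b) \<and> id b \<noteq> {} \<and> (\<lambda>_. UNIV) b \<in> \<F>"
    using B UF unfolding B'_def by (auto intro: topological_basis_open)
  then obtain y0 where y0: "\<forall>b\<in>B'. return_set T y0 (id b) \<inter> UNIV \<in> \<F>"
    using hered_countable[OF h, of B' id "\<lambda>_. UNIV"] B(1) unfolding B'_def by auto
  have orb: "\<exists>k. (T ^^ k) y0 \<in> U" if UU: "open U" "U \<noteq> {}" for U
  proof -
    obtain u where "u \<in> U" using UU by blast
    then obtain b where b: "b \<in> B" "u \<in> b" "b \<subseteq> U" using topological_basisE[OF B(2) UU(1)] by blast
    then have "b \<in> B'" unfolding B'_def by auto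
    then have "return_set T y0 b \<noteq> {}" using y0 Fne by auto
    then show ?thesis using b unfolding return_set_def by auto
  qed
  have orb2: "\<exists>k\<ge>m. (T ^^ k) y0 \<in> U" if UU: "open U" "U \<noteq> {}" for U m
  proof -
    have fin: "finite ((\<lambda>k. (T ^^ k) y0) ` {..<m})" by simp
    have "infinite U" using perfect_aux[OF tvs inf UU] .
    then have ne: "U - (\<lambda>k. (T ^^ k) y0) ` {..<m} \<noteq> {}" using fin
      by (metis Diff_eq_empty_iff finite_subset)
    have "open (U - (\<lambda>k. (T ^^ k) y0) ` {..<m})"
      using UU(1) fin by (intro open_Diff finite_imp_closed)
    then obtain k where "(T ^^ k) y0 \<in> U - (\<lambda>k. (T ^^ k) y0) ` {..<m}" using orb ne by blast
    then show ?thesis by (metis DiffD1 DiffD2 imageI lessThan_iff not_le)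
  qed
  have pre_ne: "(T ^^ n) -` U \<noteq> {}" if UU: "open U" "U \<noteq> {}" for U n
  proof -
    obtain k where k: "k \<ge> n" "(T ^^ k) y0 \<in> U" using orb2[OF UU] by blast
    have "(T ^^ k) y0 = (T ^^ n) ((T ^^ (k - n)) y0)" using k(1)
      by (metis funpow_add le_add_diff_inverse o_apply)
    then show ?thesis using k by auto
  qed
  show ?thesis
  proof -
    have "x \<in> closure {x. \<forall>i\<in>I. return_set T x (V i) \<inter> A i \<in> \<F>}" for x
    proof (unfold closure_iff_nhds_not_empty, intro allI impI)
      fix W S assume WS: "S \<subseteq> W" "open S" "x \<in> S"
      define J where "J = Inl ` (I \<times> (UNIV::nat set)) \<union> {Inr ()}"
      define VV where "VV = (\<lambda>j. case j of Inl (i, n) \<Rightarrow> (T ^^ n) -` V i | Inr (_::unit) \<Rightarrow> S)"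
      define AA where "AA = (\<lambda>j. case j of Inl (i, n::nat) \<Rightarrow> A i | Inr (_::unit) \<Rightarrow> (UNIV::nat set))"
      have cJ: "countable J" unfolding J_def using assms(7) by auto
      have "open (VV j) \<and> VV j \<noteq> {} \<and> AA j \<in> \<F>" if jJ: "j \<in> J" for j
      proof (cases "j = Inr ()")
        case True then show ?thesis using WS UF unfolding VV_def AA_def by auto
      next
        case False
        then obtain i n where j: "j = Inl (i, n)" "i \<in> I" using jJ unfolding J_def by blast
        have "open ((T ^^ n) -` V i)" using assms(9) j(2) open_vimage cont_funpow[OF cT] by blast
        moreover have "(T ^^ n) -` V i \<noteq> {}" using assms(9) j(2) pre_ne by blast
        ultimately show ?thesis using assms(8) j unfolding VV_def AA_def by simp
      qed
      then have "\<forall>j\<in>J. open (VV j) \<and> VV j \<noteq> {} \<and> AA j \<in> \<F>" by blast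
      then obtain y where y: "\<forall>j\<in>J. return_set T y (VV j) \<inter> AA j \<in> \<F>"
        using hered_countable[OF h cJ] by blast
      have "Inr () \<in> J" unfolding J_def by blast
      then have "return_set T y S \<inter> UNIV \<in> \<F>" using y unfolding VV_def AA_def by fastforce
      then have "return_set T y S \<noteq> {}" using Fne by auto
      then obtain m where m: "(T ^^ m) y \<in> S" unfolding return_set_def by auto
      have "(T ^^ m) y \<in> {x. \<forall>i\<in>I. return_set T x (V i) \<inter> A i \<in> \<F>}"
      proof (clarify)
        fix i assume "i \<in> I"
        then have "return_set T y ((T ^^ m) -` V i) \<inter> A i \<in> \<F>"
        proof -
          have "Inl (i, m) \<in> J" using \<open>i \<in> I\<close> unfolding J_def by blast
          then show ?thesis using y unfolding VV_def AA_def by fastforce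
        qed
        moreover have "return_set T y ((T ^^ m) -` V i) = return_set T ((T ^^ m) y) (V i)"
          unfolding return_set_def by (simp only: vimage_eq funpow_comm[of m T])
        ultimately show "return_set T ((T ^^ m) y) (V i) \<inter> A i \<in> \<F>" by simp
      qed
      then show "{x. \<forall>i\<in>I. return_set T x (V i) \<inter> A i \<in> \<F>} \<inter> W \<noteq> {}" using m WS by blast
    qed
    then show ?thesis by blast
  qed
qed

end
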